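(* Let $n\ge 1$, $V=(\mathbb{Z}/2\mathbb{Z})^n$ with standard basis $e_1,\dots,e_n$ and standard inner product $\langle (x_i),(y_i)\rangle=\sum_i x_iy_i$, and let $\mathcal{O}$ be the group of linear automorphisms of $V$ preserving this inner product. For integers $k\ge 1$ and $1\le i_1<i_2<\cdots<i_{2k}\le n$, let $R(i_1,\dots,i_{2k})$ be the linear map of $V$ defined by $R(e_{i_j})=\sum_{l\neq j}e_{i_l}$ for $1\le j\le 2k$ (sum over $l\in\{1,\dots,2k\}\setminus\{j\}$) and $R(e_m)=e_m$ for $m\notin\{i_1,\dots,i_{2k}\}$. Then each $R(i_1,\dots,i_{2k})$ is an involution in $\mathcal{O}$, and $\mathcal{O}$ is generated by the set of all such involutions $R(i_1,\dots,i_{2k})$. *)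

theory Defs
  imports "HOL-Analysis.Analysis" "HOL-Library.Z2"
begin

text \<open>V = (Z/2Z)^n is modelled as bit ^ 'n for a finite index type 'n with CARD('n) = n
  (n \<ge> 1 is automatic). The standard basis vector e_i is axis i 1.\<close>

definition ip :: "bit ^ 'n::finite \<Rightarrow> bit ^ 'n \<Rightarrow> bit" where
  "ip x y = (\<Sum>i\<in>UNIV. x $ i * y $ i)"

definition lin_map :: "(bit ^ 'n::finite \<Rightarrow> bit ^ 'n) \<Rightarrow> bool" where
  "lin_map f \<longleftrightarrow> (\<forall>x y. f (x + y) = f x + f y) \<and> (\<forall>c x. f (c *s x) = c *s f x)"

definition orth_group :: "(bit ^ 'n::finite \<Rightarrow> bit ^ 'n) set" where
  "orth_group = {f. bij f \<and> lin_map f \<and> (\<forall>x y. ip (f x) (f y) = ip x y)}"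

text \<open>R(i_1,...,i_2k) for the index set S = {i_1,...,i_2k}: the linear map with
  e_i \<mapsto> sum of e_l over l \<in> S - {i} for i \<in> S, and e_m \<mapsto> e_m otherwise.\<close>
definition R_img :: "'n::finite set \<Rightarrow> 'n \<Rightarrow> bit ^ 'n" where
  "R_img S i = (if i \<in> S then (\<Sum>l\<in>S - {i}. axis l 1) else axis i 1)"

definition R_map :: "'n::finite set \<Rightarrow> bit ^ 'n \<Rightarrow> bit ^ 'n" where
  "R_map S x = (\<Sum>i\<in>UNIV. x $ i *s R_img S i)"

inductive_set gen_group :: "('a \<Rightarrow> 'a) set \<Rightarrow> ('a \<Rightarrow> 'a) set" for G where
  gen_id: "id \<in> gen_group G"
| gen_gen: "g \<in> G \<Longrightarrow> g \<in> gen_group G"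
| gen_comp: "f \<in> gen_group G \<Longrightarrow> g \<in> gen_group G \<Longrightarrow> f \<circ> g \<in> gen_group G"
| gen_inv: "f \<in> gen_group G \<Longrightarrow> inv f \<in> gen_group G"

end

theory Submission imports Defs begin

declare add_bit_eq_xor[simp del] mult_bit_eq_and[simp del]

lemma bit_cases2: "(b::bit) = 0 \<or> b = 1" by (cases b) auto
lemma bit_dbl[simp]: "(b::bit) + b = 0" by (cases b) auto
lemma bit_sq[simp]: "(b::bit) * b = b" by (cases b) auto

lemma ip_sym: "ip x y = ip y x" unfolding ip_def by (simp only: mult.commute)
lemma ip_add_left: "ip (x + y) z = ip x z + ip y z"
  unfolding ip_def by (simp only: vector_add_component distrib_right sum.distrib)
lemma ip_add_right: "ip z (x + y) = ip z x + ip z y"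
  unfolding ip_def by (simp only: vector_add_component distrib_left sum.distrib)
lemma ip_smult_left: "ip (c *s x) y = c * ip x y"
  unfolding ip_def by (simp only: vector_smult_component sum_distrib_left mult.assoc)
lemma ip_smult_right: "ip y (c *s x) = c * ip y x"
  unfolding ip_def by (simp only: vector_smult_component sum_distrib_left mult.left_commute)
lemma ip_axis_right: "ip x (axis j 1) = x $ j"
  unfolding ip_def axis_def by (simp add: if_distrib cong: if_cong)
lemma ip_axis_left: "ip (axis j 1) x = x $ j"
  using ip_axis_right ip_sym by metis
lemma axis_nth: "axis i (1::bit) $ j = (if j = i then 1 else 0)"
  unfolding axis_def by simp


definition T :: "bit ^ 'n::finite \<Rightarrow> bit ^ 'n \<Rightarrow> bit ^ 'n" where
  "T v x = x + ip x v *s v"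

lemma T_add: "T v (x + y) = T v x + T v y"
  unfolding T_def by (simp add: vec_eq_iff ip_add_left algebra_simps)
lemma T_smult: "T v (c *s x) = c *s T v x"
  unfolding T_def by (simp add: vec_eq_iff ip_smult_left algebra_simps)

lemma T_ip: assumes "ip v v = 0" shows "ip (T v x) (T v y) = ip x y"
proof -
  have "ip (T v x) (T v y) = ip x y + ip y v * ip x v + ip x v * ip v y + ip x v * ip y v * ip v v"
    unfolding T_def by (simp add: ip_add_left ip_add_right ip_smult_left ip_smult_right algebra_simps)
  also have "\<dots> = ip x y" using assms by (simp add: ip_sym[of v y] mult.commute)
  finally show ?thesis .
qed
lemma T_T: assumes "ip v v = 0" shows "T v (T v x) = x"
proof -
  have "T v (T v x) = x + (ip x v + ip x v + ip x v * ip v v) *s v"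
    unfolding T_def by (simp add: vec_eq_iff ip_add_left ip_smult_left algebra_simps)
  then show ?thesis using assms by (simp add: vec_eq_iff)
qed
lemma T_orth: assumes "ip v v = 0" shows "T v \<in> orth_group" "T v \<circ> T v = id"
proof -
  show c: "T v \<circ> T v = id" using T_T[OF assms] by (simp add: fun_eq_iff)
  show "T v \<in> orth_group" unfolding orth_group_def lin_map_def
    using o_bij[OF c c] T_add T_smult T_ip[OF assms] by blast
qed

definition ind :: "'n::finite set \<Rightarrow> bit ^ 'n" where
  "ind S = (\<chi> i. if i \<in> S then 1 else 0)"

lemma R_img_nth: "R_img S i $ j = (if i \<in> S then (if j \<in> S \<and> j \<noteq> i then 1 else 0) else (if j = i then 1 else 0))"
  unfolding R_img_def by (simp add: axis_nth sum.If_cases)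

lemma ip_ind_self: "ip (ind S) (ind S) = of_nat (card S)"
  unfolding ip_def ind_def by (simp add: if_distrib sum.If_cases cong: if_cong)

lemma of_nat_bit_eq0: "(of_nat n :: bit) = 0 \<longleftrightarrow> even n"
  by (induction n) auto


lemma sum_ind: "(\<Sum>i\<in>UNIV. (x::bit^'n::finite) $ i * (if i \<in> A then 1 else 0)) = (\<Sum>i\<in>A. x $ i)"
proof -
  have "(\<Sum>i\<in>UNIV. x $ i * (if i \<in> A then 1 else 0)) = (\<Sum>i\<in>UNIV. if i \<in> A then x $ i else 0)"
    by (rule sum.cong) auto
  also have "\<dots> = (\<Sum>i\<in>UNIV \<inter> A. x $ i)" by (rule sum.inter_restrict[symmetric]) simp
  finally show ?thesis by simp
qed

lemma ip_ind: "ip x (ind S) = (\<Sum>i\<in>S. x $ i)"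
  unfolding ip_def ind_def using sum_ind by simp

lemma R_map_nth: "R_map S x $ j = (\<Sum>i\<in>UNIV. x $ i * R_img S i $ j)"
  unfolding R_map_def by (simp only: sum_component vector_smult_component)

lemma R_map_T: "R_map S = T (ind (S::'n::finite set))"
proof
  fix x :: "bit ^ 'n"
  show "R_map S x = T (ind S) x"
  proof (subst vec_eq_iff, intro allI)
    fix j
    show "R_map S x $ j = T (ind S) x $ j"
    proof (cases "j \<in> S")
      case True
      have "R_map S x $ j = (\<Sum>i\<in>UNIV. x $ i * (if i \<in> S - {j} then 1 else 0))"
        unfolding R_map_nth using True by (intro sum.cong) (auto simp: R_img_nth)
      also have "\<dots> = (\<Sum>i\<in>S - {j}. x $ i)" by (rule sum_ind)
      finally have 1: "R_map S x $ j = (\<Sum>i\<in>S - {j}. x $ i)" .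
      have 2: "T (ind S) x $ j = x $ j + (\<Sum>i\<in>S. x $ i)"
        unfolding T_def ip_ind using True by (simp add: ind_def)
      have 3: "(\<Sum>i\<in>S. x $ i) = x $ j + (\<Sum>i\<in>S - {j}. x $ i)"
        using True by (simp add: sum.remove)
      show ?thesis unfolding 1 2 3 by (simp add: add.assoc[symmetric])
    next
      case False
      have "R_map S x $ j = (\<Sum>i\<in>UNIV. x $ i * (if i \<in> {j} then 1 else 0))"
        unfolding R_map_nth using False by (intro sum.cong) (auto simp: R_img_nth)
      also have "\<dots> = x $ j" by (simp only: sum_ind) simp
      finally show ?thesis unfolding T_def using False by (simp add: ind_def)
    qed
  qed
qed

abbreviation e :: "'n::finite \<Rightarrow> bit ^ 'n" where "e i \<equiv> axis i 1"

lemma ip_ee: "ip (e a) (e b :: bit ^ 'n::finite) = (if b = a then 1 else 0)"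
  by (simp add: ip_axis_right axis_nth)

lemma orth_ip: "f \<in> orth_group \<Longrightarrow> ip (f x) (f y) = ip x y"
  unfolding orth_group_def by blast

lemma lin_zero: "lin_map f \<Longrightarrow> f 0 = 0"
  unfolding lin_map_def by (metis add_0 add_cancel_right_right)

lemma lin_sum: "lin_map f \<Longrightarrow> f (\<Sum>i\<in>A. g i) = (\<Sum>i\<in>A. f (g i))"
proof (induction A rule: infinite_finite_induct)
  case (infinite A) then show ?case by (simp add: lin_zero)
next
  case empty then show ?case by (simp add: lin_zero)
next
  case (insert x F) then show ?case by (simp add: lin_map_def)
qed

lemma orth_fix_id:
  assumes "f \<in> orth_group" "\<And>i. f (e i) = (e i :: bit ^ 'n::finite)"
  shows "f = id"
proof
  fix x :: "bit ^ 'n"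
  have lin: "lin_map f" using assms(1) unfolding orth_group_def by blast
  have "f x = f (\<Sum>i\<in>UNIV. x $ i *s e i)" by (simp only: basis_expansion)
  also have "\<dots> = (\<Sum>i\<in>UNIV. x $ i *s f (e i))"
    using lin by (simp add: lin_sum) (simp add: lin_map_def)
  also have "\<dots> = x" using assms(2) by (simp only: basis_expansion)
  finally show "f x = id x" by simp
qed

lemma id_orth: "id \<in> orth_group"
  unfolding orth_group_def lin_map_def by simp

lemma comp_orth: assumes "f \<in> orth_group" "g \<in> orth_group" shows "f \<circ> g \<in> orth_group"
proof -
  have "bij f" "lin_map f" "\<And>x y. ip (f x) (f y) = ip x y" 
       "bij g" "lin_map g" "\<And>x y. ip (g x) (g y) = ip x y"
    using assms unfolding orth_group_def by blast+
  then show ?thesis unfolding orth_group_def lin_map_def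
    by (simp add: bij_comp)
qed

lemma inv_orth: assumes "f \<in> orth_group" shows "inv f \<in> orth_group"
proof -
  have b: "bij f" and l: "lin_map f" and p: "\<And>x y. ip (f x) (f y) = ip x y"
    using assms unfolding orth_group_def by blast+
  have fi: "\<And>x. f (inv f x) = x" using b by (simp add: bij_is_surj surj_f_inv_f)
  have if_: "\<And>x. inv f (f x) = x" using b by (simp add: bij_is_inj)
  have "inv f (x + y) = inv f x + inv f y" for x y
  proof -
    have "f (inv f x + inv f y) = x + y" using l fi unfolding lin_map_def by simp
    then show ?thesis using if_ by metis
  qed
  moreover have "inv f (c *s x) = c *s inv f x" for c x
  proof -
    have "f (c *s inv f x) = c *s x" using l fi unfolding lin_map_def by simp
    then show ?thesis using if_ by metis
  qed
  moreover have "ip (inv f x) (inv f y) = ip x y" for x y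
    using p[of "inv f x" "inv f y"] fi by simp
  ultimately show ?thesis unfolding orth_group_def lin_map_def
    using bij_imp_bij_inv[OF b] by blast
qed

definition GS :: "(bit ^ 'n::finite \<Rightarrow> bit ^ 'n) set" where
  "GS = {R_map S | S::'n set. S \<noteq> {} \<and> even (card S)}"

lemma GS_orth: assumes "g \<in> GS" shows "g \<in> orth_group"
proof -
  obtain S where S: "g = R_map S" "even (card S)" using assms unfolding GS_def by blast
  have "ip (ind S) (ind S) = 0" using S(2) ip_ind_self of_nat_bit_eq0 by metis
  then show ?thesis using S(1) R_map_T T_orth(1) by metis
qed

lemma gen_orth: "f \<in> gen_group GS \<Longrightarrow> f \<in> orth_group"
  proof (induction rule: gen_group.induct)
  case gen_id then show ?case by (rule id_orth)
next
  case (gen_gen g) then show ?case by (rule GS_orth)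
next
  case (gen_comp f g) then show ?case using comp_orth by blast
next
  case (gen_inv f) then show ?case using inv_orth by blast
qed

lemma T_gen: assumes "ip s s = 0" shows "T s \<in> gen_group GS"
proof (cases "s = 0")
  case True
  have "T s x = x" for x unfolding T_def True by (simp add: vec_eq_iff)
  then have "T s = id" by (simp add: fun_eq_iff)
  then show ?thesis by (simp add: gen_group.gen_id)
next
  case False
  define S where "S = {i. s $ i = 1}"
  have iss: "ind S = s" unfolding vec_eq_iff
  proof
    fix i show "ind S $ i = s $ i"
      using bit_cases2[of "s $ i"] by (auto simp add: ind_def S_def)
  qed
  obtain i where "s $ i \<noteq> 0" using False unfolding vec_eq_iff by auto
  then have "i \<in> S" unfolding S_def using bit_cases2[of "s $ i"] by auto
  then have "S \<noteq> {}" by blast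
  moreover have "even (card S)"
    using assms ip_ind_self[of S] of_nat_bit_eq0[of "card S"] unfolding iss by simp
  ultimately have "R_map S \<in> GS" unfolding GS_def by blast
  moreover have "R_map S = T s" using iss R_map_T by metis
  ultimately show ?thesis by (metis gen_group.gen_gen)
qed

lemma ip_e_self: "ip (e i) (e i :: bit ^ 'n::finite) = 1" by (simp add: ip_ee)

lemma fixed_comp:
  assumes "f \<in> orth_group" "f (e j) = e j" "f (e i) \<noteq> (e i :: bit ^ 'n::finite)"
  shows "f (e i) $ j = 0" "j \<noteq> i"
proof -
  show "j \<noteq> i" using assms by auto
  then show "f (e i) $ j = 0"
    using orth_ip[OF assms(1), of "e i" "e j"] assms(2) by (simp add: ip_axis_right ip_ee axis_nth)
qed

lemma step1:
  assumes f: "f \<in> orth_group" and vi: "f (e i) $ i = (0::bit)"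
  shows "\<exists>s. ip s s = 0 \<and> T s (f (e i)) = e i \<and>
     (\<forall>j. f (e j) = e j \<longrightarrow> T s (f (e j)) = (e j :: bit ^ 'n::finite))"
proof -
  define v where "v = f (e i)"
  define s where "s = v + e i"
  have vv: "ip v v = 1" unfolding v_def using orth_ip[OF f] ip_e_self by metis
  have vi': "ip v (e i) = 0" unfolding v_def using vi by (simp add: ip_axis_right)
  have ne: "v \<noteq> e i" using vi unfolding v_def by (auto simp: axis_nth)
  have ss: "ip s s = 0" unfolding s_def
    by (simp add: ip_add_left ip_add_right vv vi' ip_sym[of "e i" v] ip_e_self)
  have vs: "ip v s = 1" unfolding s_def by (simp add: ip_add_right vv vi')
  have "T s v = v + s" unfolding T_def vs by simp
  also have "\<dots> = e i" unfolding s_def by (simp add: vec_eq_iff add.assoc[symmetric])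
  finally have "T s v = e i" .
  moreover have "T s (f (e j)) = e j" if fj: "f (e j) = e j" for j
  proof -
    have "v $ j = 0" "j \<noteq> i" using fixed_comp[OF f fj] ne unfolding v_def by auto
    then have "ip (e j) s = 0" unfolding s_def by (simp add: ip_axis_left axis_nth)
    then show ?thesis unfolding fj T_def by simp
  qed
  ultimately show ?thesis using ss unfolding v_def by blast
qed

lemma step2:
  assumes f: "f \<in> orth_group" and ne: "f (e i) \<noteq> e i" and vi: "f (e i) $ i = (1::bit)"
  shows "\<exists>t. ip t t = 0 \<and> T t (f (e i)) $ i = 0 \<and>
     (\<forall>j. f (e j) = e j \<longrightarrow> T t (f (e j)) = (e j :: bit ^ 'n::finite))"
proof -
  define v where "v = f (e i)"
  have "\<exists>k. k \<noteq> i \<and> f (e k) \<noteq> e k \<and> v $ k = 0"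
  proof (rule ccontr)
    assume nk: "\<not> ?thesis"
    have H: "v $ k = 1" if "k \<noteq> i" "f (e k) \<noteq> e k" for k
      using nk that bit_cases2[of "v $ k"] by blast
    obtain k where k: "v $ k \<noteq> e i $ k" using ne unfolding v_def vec_eq_iff by blast
    have ki: "k \<noteq> i" using k vi unfolding v_def by (auto simp: axis_nth)
    have vk: "v $ k \<noteq> 0" using k ki by (simp add: axis_nth)
    have fk: "f (e k) \<noteq> e k"
    proof
      assume "f (e k) = e k"
      then have "v $ k = 0" using fixed_comp[OF f _ ne] unfolding v_def by blast
      then show False using vk by simp
    qed
    define w where "w = f (e k)"
    have comp: "w $ l * v $ l = w $ l * w $ l" for l
    proof (cases "f (e l) = e l")
      case True
      then have "w $ l = 0" using fixed_comp[OF f True fk] unfolding w_def by blast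
      then show ?thesis by simp
    next
      case False
      show ?thesis
      proof (cases "l = i")
        case True then show ?thesis using vi unfolding v_def by simp
      next
        case li: False then show ?thesis using H[OF li False] by simp
      qed
    qed
    have "ip w v = ip w w" unfolding ip_def by (rule sum.cong[OF refl comp])
    moreover have "ip w v = 0" unfolding w_def v_def using orth_ip[OF f] ki by (simp add: ip_ee)
    moreover have "ip w w = 1" unfolding w_def using orth_ip[OF f] by (simp add: ip_ee)
    ultimately show False by simp
  qed
  then obtain k where ki: "k \<noteq> i" and fk: "f (e k) \<noteq> e k" and vk: "v $ k = 0" by blast
  define t where "t = e i + e k"
  have tt: "ip t t = 0" unfolding t_def using ki
    by (simp add: ip_add_left ip_add_right ip_ee)
  have vt: "ip v t = 1" unfolding t_def using vi vk by (simp add: ip_add_right ip_axis_right v_def)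
  have "T t v $ i = v $ i + t $ i" unfolding T_def vt by simp
  also have "\<dots> = 0" unfolding t_def using vi ki by (simp add: axis_nth v_def)
  finally have 1: "T t v $ i = 0" .
  moreover have "T t (f (e j)) = e j" if fj: "f (e j) = e j" for j
  proof -
    have "j \<noteq> i" using fixed_comp[OF f fj ne] by blast
    moreover have "j \<noteq> k" using fj fk by blast
    ultimately have "ip (e j) t = 0" unfolding t_def by (simp add: ip_add_right ip_ee)
    then show ?thesis unfolding fj T_def by simp
  qed
  ultimately show ?thesis using tt unfolding v_def by blast
qed

lemma reduce:
  assumes f: "f \<in> orth_group" and ne: "f (e i) \<noteq> (e i :: bit ^ 'n::finite)"
  shows "\<exists>r. r \<in> gen_group GS \<and> r \<in> orth_group \<and> r (f (e i)) = e i \<and>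
     (\<forall>j. f (e j) = e j \<longrightarrow> r (f (e j)) = e j)"
proof (cases "f (e i) $ i = 0")
  case True
  from step1[OF f True] obtain s where s: "ip s s = 0" "T s (f (e i)) = e i"
    "\<forall>j. f (e j) = e j \<longrightarrow> T s (f (e j)) = e j" by blast
  show ?thesis using T_gen[OF s(1)] T_orth(1)[OF s(1)] s(2,3) by blast
next
  case False
  then have vi: "f (e i) $ i = 1" using bit_cases2 by blast
  from step2[OF f ne vi] obtain t where t: "ip t t = 0" "T t (f (e i)) $ i = 0"
    "\<forall>j. f (e j) = e j \<longrightarrow> T t (f (e j)) = e j" by blast
  define h where "h = T t \<circ> f"
  have h: "h \<in> orth_group" unfolding h_def using comp_orth T_orth(1)[OF t(1)] f by blast
  have hi: "h (e i) $ i = 0" unfolding h_def using t(2) by simp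
  from step1[OF h hi] obtain s where s: "ip s s = 0" "T s (h (e i)) = e i"
    "\<forall>j. h (e j) = e j \<longrightarrow> T s (h (e j)) = e j" by blast
  define r where "r = T s \<circ> T t"
  have "r \<in> gen_group GS" unfolding r_def
    using T_gen[OF s(1)] T_gen[OF t(1)] by (rule gen_group.gen_comp)
  moreover have "r \<in> orth_group" unfolding r_def
    using comp_orth T_orth(1)[OF t(1)] T_orth(1)[OF s(1)] by blast
  moreover have "r (f (e i)) = e i" using s(2) unfolding r_def h_def by simp
  moreover have "\<forall>j. f (e j) = e j \<longrightarrow> r (f (e j)) = e j"
    using s(3) t(3) unfolding r_def h_def by simp
  ultimately show ?thesis by blast
qed

lemma orth_in_gen: "f \<in> orth_group \<Longrightarrow> f \<in> gen_group (GS :: (bit ^ 'n::finite \<Rightarrow> bit ^ 'n) set)"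
proof (induction "card {i::'n. f (e i) \<noteq> e i}" arbitrary: f rule: less_induct)
  case less
  show ?case
  proof (cases "\<forall>i. f (e i) = e i")
    case True
    then have "f = id" using orth_fix_id[OF less.prems] by blast
    then show ?thesis by (simp add: gen_group.gen_id)
  next
    case False
    then obtain i where ne: "f (e i) \<noteq> e i" by blast
    from reduce[OF less.prems ne] obtain r where r: "r \<in> gen_group GS" "r \<in> orth_group"
      "r (f (e i)) = e i" "\<forall>j. f (e j) = e j \<longrightarrow> r (f (e j)) = e j" by blast
    define g where "g = r \<circ> f"
    have g: "g \<in> orth_group" unfolding g_def using comp_orth r(2) less.prems by blast
    have "{j. g (e j) \<noteq> e j} \<subset> {j. f (e j) \<noteq> e j}"
      using r(3,4) ne unfolding g_def by auto
    then have "card {j. g (e j) \<noteq> e j} < card {j. f (e j) \<noteq> e j}"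
      by (rule psubset_card_mono[OF finite])
    then have gg: "g \<in> gen_group GS" using less.hyps g by blast
    have ir: "inv r \<in> gen_group GS" using r(1) by (rule gen_group.gen_inv)
    have "bij r" using r(2) unfolding orth_group_def by blast
    then have "inv r \<circ> g = f" unfolding g_def by (simp add: fun_eq_iff bij_is_inj)
    then show ?thesis using gen_group.gen_comp[OF ir gg] by simp
  qed
qed

theorem theorem5p1:
  shows "(\<forall>S::'n::finite set. S \<noteq> {} \<and> even (card S) \<longrightarrow>
            R_map S \<in> orth_group \<and> R_map S \<circ> R_map S = id)
       \<and> (orth_group :: (bit ^ 'n \<Rightarrow> bit ^ 'n) set)
           = gen_group {R_map S | S::'n set. S \<noteq> {} \<and> even (card S)}"
proof
  show "\<forall>S::'n::finite set. S \<noteq> {} \<and> even (card S) \<longrightarrow>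
            R_map S \<in> orth_group \<and> R_map S \<circ> R_map S = id"
  proof (intro allI impI)
    fix S :: "'n set" assume "S \<noteq> {} \<and> even (card S)"
    then have "ip (ind S) (ind S) = 0" using ip_ind_self of_nat_bit_eq0 by metis
    then show "R_map S \<in> orth_group \<and> R_map S \<circ> R_map S = id"
      using T_orth R_map_T by metis
  qed
  have "(orth_group :: (bit ^ 'n \<Rightarrow> bit ^ 'n) set) = gen_group GS"
    using orth_in_gen gen_orth by blast
  then show "(orth_group :: (bit ^ 'n \<Rightarrow> bit ^ 'n) set)
           = gen_group {R_map S | S::'n set. S \<noteq> {} \<and> even (card S)}"
    unfolding GS_def .
qed
end
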